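(* Let $J_1,\dots,J_7$ be pairwise anticommuting orthogonal complex structures on $\mathfrak a=\mathbb R^8$, $\theta\in(0,\pi/2)$, $J'=J_7\cos\theta+J_6J_7\sin\theta$, and $V=\mathrm{Span}(J_1,\dots,J_6,J')$ with the inner product $\|J\|^2=-\frac18\mathrm{Tr}(J^2)$. Then for every $N\in O(\mathfrak a)$ with $NVN^{-1}\subset V$ (so that $K\mapsto N^{-1}KN$ is orthogonal on $V$) there exist $\varepsilon_7\in\{\pm1\}$ with $N^{-1}J_6N=J_6$, $N^{-1}J_7N=\varepsilon_7J_7$, $N^{-1}J'N=\varepsilon_7J'$. In particular there is no such $N$ with $N^{-1}J_6N=-J_6$, and for every inner product on $V$ whose restriction to $\mathrm{Span}(J_1,\dots,J_5)$ is standard and with $J_6,J'\perp J_i$ ($i\le5$), the pair $(V,\langle\cdot,\cdot\rangle)$ is not a WS-pair.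
   Context: Orthogonal complex structures on $\mathbb R^8$ are orthogonal matrices $J$ with $J^2=-I_8$. An inner product on $V\subset\mathfrak{so}(8)$ is standard if it is a positive multiple of $(J,K)\mapsto-\mathrm{Tr}(JK)$. For a Euclidean space $\mathfrak a$, a subspace $V\subset\mathfrak{so}(\mathfrak a)$ with inner product $\langle\cdot,\cdot\rangle$ defines the metric 2-step nilpotent Lie algebra $\mathfrak n=V\oplus\mathfrak a$ (orthogonal sum, $V$ central, $\langle J,[X,Y]\rangle=\langle JX,Y\rangle$); it is a WS-pair if the corresponding simply connected nilpotent Lie group with left-invariant metric is weakly symmetric. Standing fact: this holds iff for every $J\in V$, $X\in\mathfrak a$ there is $N\in\mathcal N(V)=\{N\in O(\mathfrak a): NVN^{-1}\subset V$, $K\mapsto NKN^{-1}$ orthogonal on $(V,\langle\cdot,\cdot\rangle)\}$ with $NX=-X$, $NJ=-JN$. *)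

theory Defs
  imports "HOL-Analysis.Analysis"
begin

type_synonym mat8 = "real^8^8"

definition ocs :: "mat8 \<Rightarrow> bool" where
  "ocs J \<longleftrightarrow> orthogonal_matrix J \<and> J ** J = - mat 1"

definition inner_product_on :: "mat8 set \<Rightarrow> (mat8 \<Rightarrow> mat8 \<Rightarrow> real) \<Rightarrow> bool" where
  "inner_product_on V ip \<longleftrightarrow>
     (\<forall>A\<in>V. \<forall>B\<in>V. ip A B = ip B A) \<and>
     (\<forall>A\<in>V. \<forall>B\<in>V. \<forall>C\<in>V. \<forall>a b. ip (a *\<^sub>R A + b *\<^sub>R B) C = a * ip A C + b * ip B C) \<and>
     (\<forall>A\<in>V. A \<noteq> 0 \<longrightarrow> ip A A > 0)"

definition standard_on :: "mat8 set \<Rightarrow> (mat8 \<Rightarrow> mat8 \<Rightarrow> real) \<Rightarrow> bool" where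
  "standard_on W ip \<longleftrightarrow> (\<exists>c>0. \<forall>A\<in>W. \<forall>B\<in>W. ip A B = - c * trace (A ** B))"

definition normalizer_set :: "mat8 set \<Rightarrow> (mat8 \<Rightarrow> mat8 \<Rightarrow> real) \<Rightarrow> mat8 set" where
  "normalizer_set V ip = {N. orthogonal_matrix N \<and>
      (\<forall>K\<in>V. N ** K ** matrix_inv N \<in> V) \<and>
      (\<forall>K\<in>V. \<forall>L\<in>V. ip (N ** K ** matrix_inv N) (N ** L ** matrix_inv N) = ip K L)}"

text \<open>WS-pair, via the standing characterization.\<close>
definition WS_pair :: "mat8 set \<Rightarrow> (mat8 \<Rightarrow> mat8 \<Rightarrow> real) \<Rightarrow> bool" where
  "WS_pair V ip \<longleftrightarrow> (\<forall>J\<in>V. \<forall>X::real^8. \<exists>N\<in>normalizer_set V ip.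
      N *v X = - X \<and> N ** J = - (J ** N))"

end

theory Submission
  imports Defs
begin


lemma acomm_sum_right:
  fixes x :: "'a::ring"
  assumes "\<And>i. i \<in> F \<Longrightarrow> x * f i = - (f i * x)"
  shows "x * sum f F = - (sum f F * x)"
proof -
  have "x * sum f F = (\<Sum>i\<in>F. x * f i)" by (simp add: sum_distrib_left)
  also have "\<dots> = (\<Sum>i\<in>F. - (f i * x))" by (rule sum.cong) (auto simp: assms)
  also have "\<dots> = - (sum f F * x)" by (simp add: sum_distrib_right sum_negf)
  finally show ?thesis .
qed

lemma inv_scale0:
  fixes x y :: "'a::real_algebra_1"
  assumes "x * y = 1" "t *\<^sub>R x = 0" shows "t = 0"
proof -
  have "(t *\<^sub>R x) * y = of_real t" using assms(1) by (simp add: of_real_def)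
  then have "(of_real t :: 'a) = 0" using assms(2) by simp
  then show ?thesis by simp
qed

lemma scaleR_2x: "(t*2) *\<^sub>R x = t *\<^sub>R x + t *\<^sub>R x" "(2*t) *\<^sub>R x = t *\<^sub>R x + t *\<^sub>R x"
  for x :: "'b::real_vector"
  by (metis mult_2 mult_2_right scaleR_add_left)+

locale cl =
  fixes J :: "nat \<Rightarrow> 'a::real_algebra_1" and th :: real
  assumes sq: "\<And>i. i \<in> {1..7} \<Longrightarrow> J i * J i = -1"
    and an: "\<And>i j. i \<in> {1..7} \<Longrightarrow> j \<in> {1..7} \<Longrightarrow> i \<noteq> j \<Longrightarrow> J i * J j = - (J j * J i)"
    and th0: "0 < th" and th1: "th < pi/2"
begin

definition "kc = cos th"
definition "ks = sin th"
definition "D = J 6 * J 7"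
definition "Jp = kc *\<^sub>R J 7 + ks *\<^sub>R D"
definition "S a = (\<Sum>i\<in>{1..5}. a i *\<^sub>R J i)"
definition "comb a b c = S a + b *\<^sub>R J 6 + c *\<^sub>R Jp"
definition ssq :: "(nat \<Rightarrow> real) \<Rightarrow> real" where "ssq a = (\<Sum>i\<in>{1..5::nat}. (a i)^2)"

lemma co_pos: "kc > 0" unfolding kc_def using th0 th1 by (intro cos_gt_zero) auto
lemma si_pos: "ks > 0" unfolding ks_def using th0 th1 by (intro sin_gt_zero) auto
lemma cs: "kc * kc + ks * ks = 1"
  using sin_cos_squared_add[of th] unfolding kc_def ks_def by (simp add: power2_eq_square)

lemma J66: "J 6 * J 6 = -1" by (rule sq) simp
lemma J77: "J 7 * J 7 = -1" by (rule sq) simp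
lemma Jkk: "k \<in> {1..5} \<Longrightarrow> J k * J k = -1" by (rule sq) auto
lemma a67: "J 6 * J 7 = - (J 7 * J 6)" by (rule an) auto
lemma ak6: "k \<in> {1..5} \<Longrightarrow> J 6 * J k = - (J k * J 6)" by (rule an) auto
lemma ak7: "k \<in> {1..5} \<Longrightarrow> J 7 * J k = - (J k * J 7)" by (rule an) auto

lemma S_a67: "m \<in> {6,7} \<Longrightarrow> J m * S a = - (S a * J m)"
  unfolding S_def
  by (rule acomm_sum_right) (use an[of m] in auto)

lemma S_a6: "J 6 * S a = - (S a * J 6)" by (rule S_a67) simp
lemma S_a7: "J 7 * S a = - (S a * J 7)" by (rule S_a67) simp

lemma S_D: "D * S a = S a * D"
proof -
  have "D * S a = J 6 * (J 7 * S a)" by (simp add: D_def mult.assoc)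
  also have "\<dots> = - ((J 6 * S a) * J 7)" by (simp add: S_a7 mult.assoc)
  also have "\<dots> = S a * D" by (simp add: S_a6 D_def mult.assoc)
  finally show ?thesis .
qed

lemma sum_sq:
  assumes "F \<subseteq> {1..7}"
  shows "(\<Sum>i\<in>F. a i *\<^sub>R J i) * (\<Sum>i\<in>F. a i *\<^sub>R J i) = - of_real (\<Sum>i\<in>F. (a i)^2)"
proof -
  have "finite F" using assms finite_subset by blast
  from this assms show ?thesis
  proof (induction F rule: finite_subset_induct')
    case empty then show ?case by simp
  next
    case (insert k F)
    let ?s = "\<Sum>i\<in>F. a i *\<^sub>R J i"
    have ac: "J k * ?s = - (?s * J k)"
    proof (rule acomm_sum_right)
      fix i assume "i \<in> F"
      then have "J k * J i = - (J i * J k)" using insert by (intro an) auto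
      then show "J k * (a i *\<^sub>R J i) = - (a i *\<^sub>R J i * J k)" by simp
    qed
    have kk: "J k * J k = -1" using insert sq by auto
    have "(a k *\<^sub>R J k + ?s) * (a k *\<^sub>R J k + ?s)
        = (a k * a k) *\<^sub>R (J k * J k) + a k *\<^sub>R (J k * ?s + ?s * J k) + ?s * ?s"
      by (simp add: algebra_simps)
    also have "\<dots> = - of_real ((a k)^2 + (\<Sum>i\<in>F. (a i)^2))"
      using insert kk ac by (simp add: of_real_def algebra_simps power2_eq_square)
    finally show ?case using insert by simp
  qed
qed

lemma S_sq: "S a * S a = - of_real (ssq a)"
  unfolding S_def ssq_def by (rule sum_sq) auto

lemma S_anti_k:
  assumes k: "k \<in> {1..5}"
  shows "J k * S a + S a * J k = - of_real (2 * a k)"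
proof -
  let ?r = "\<Sum>i\<in>{1..5} - {k}. a i *\<^sub>R J i"
  have Sa: "S a = a k *\<^sub>R J k + ?r" unfolding S_def using k by (simp add: sum.remove)
  have ac: "J k * ?r = - (?r * J k)"
    by (rule acomm_sum_right) (use k an[of k] in auto)
  have "J k * S a + S a * J k = (2 * a k) *\<^sub>R (J k * J k) + (J k * ?r + ?r * J k)"
    unfolding Sa by (simp add: algebra_simps scaleR_2x)
  also have "\<dots> = - of_real (2 * a k)" using ac Jkk[OF k] by (simp add: of_real_def)
  finally show ?thesis .
qed

lemma J_D: "k \<in> {1..5} \<Longrightarrow> J k * D = D * J k"
proof -
  assume k: "k \<in> {1..5}"
  have "J k * D = - (J 6 * J k * J 7)" by (simp add: D_def ak6[OF k] mult.assoc)
  also have "\<dots> = D * J k" by (simp add: D_def ak7[OF k] mult.assoc)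
  finally show ?thesis .
qed

lemma a76: "J 7 * J 6 = - (J 6 * J 7)" by (rule an) auto
lemma J7D: "J 7 * D = J 6"
proof -
  have "J 7 * D = - ((J 7 * J 7) * J 6)" by (simp add: D_def a67 mult.assoc)
  then show ?thesis by (simp add: J77)
qed
lemma DJ7: "D * J 7 = - J 6" by (simp add: D_def mult.assoc J77)
lemma J6D: "J 6 * D = - J 7" by (simp add: D_def mult.assoc[symmetric] J66)
lemma DJ6: "D * J 6 = J 7"
proof -
  have "D * J 6 = - (J 6 * J 6 * J 7)" by (simp add: D_def mult.assoc a76)
  then show ?thesis by (simp add: J66)
qed
lemma DD: "D * D = -1"
proof -
  have "D * D = (D * J 6) * J 7" by (simp add: D_def mult.assoc)
  then show ?thesis by (simp add: DJ6 J77)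
qed

lemma Jp_sq: "Jp * Jp = -1"
proof -
  have "Jp * Jp = (kc*kc) *\<^sub>R (J 7 * J 7) + (kc*ks) *\<^sub>R (J 7 * D + D * J 7) + (ks*ks) *\<^sub>R (D * D)"
    by (simp add: Jp_def algebra_simps)
  also have "\<dots> = - ((kc*kc + ks*ks) *\<^sub>R 1)" by (simp add: J77 J7D DJ7 DD algebra_simps)
  finally show ?thesis by (simp add: cs)
qed

lemma J6Jp: "J 6 * Jp = kc *\<^sub>R D - ks *\<^sub>R J 7"
  by (simp add: Jp_def algebra_simps J6D D_def[symmetric])
lemma JpJ6: "Jp * J 6 = - (kc *\<^sub>R D) + ks *\<^sub>R J 7"
  by (simp add: Jp_def algebra_simps DJ6 a76 D_def[symmetric])
lemma Jp_a6: "J 6 * Jp = - (Jp * J 6)"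
  by (simp add: J6Jp JpJ6)

lemma S_Jp: "S a * Jp + Jp * S a = (2 * ks) *\<^sub>R (D * S a)"
proof -
  have "S a * Jp + Jp * S a = kc *\<^sub>R (S a * J 7 + J 7 * S a) + ks *\<^sub>R (S a * D + D * S a)"
    by (simp add: Jp_def algebra_simps)
  also have "\<dots> = (2 * ks) *\<^sub>R (D * S a)" by (simp add: S_a7 S_D algebra_simps scaleR_2x)
  finally show ?thesis .
qed

lemma D_eq: "D = kc *\<^sub>R (J 6 * Jp) + ks *\<^sub>R Jp"
proof -
  have "kc *\<^sub>R (J 6 * Jp) + ks *\<^sub>R Jp = kc *\<^sub>R (kc *\<^sub>R D - ks *\<^sub>R J 7) + ks *\<^sub>R (kc *\<^sub>R J 7 + ks *\<^sub>R D)"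
    by (subst J6Jp) (simp add: Jp_def)
  also have "\<dots> = (kc * kc + ks * ks) *\<^sub>R D" by (simp add: algebra_simps)
  finally have "kc *\<^sub>R (J 6 * Jp) + ks *\<^sub>R Jp = (kc * kc + ks * ks) *\<^sub>R D" .
  then show ?thesis by (simp add: cs)
qed

lemma J7_eq: "J 7 = kc *\<^sub>R Jp - ks *\<^sub>R (J 6 * Jp)"
proof -
  have "kc *\<^sub>R Jp - ks *\<^sub>R (J 6 * Jp) = kc *\<^sub>R (kc *\<^sub>R J 7 + ks *\<^sub>R D) - ks *\<^sub>R (kc *\<^sub>R D - ks *\<^sub>R J 7)"
    by (subst J6Jp) (simp add: Jp_def)
  also have "\<dots> = (kc * kc + ks * ks) *\<^sub>R J 7" by (simp add: algebra_simps)
  finally have "kc *\<^sub>R Jp - ks *\<^sub>R (J 6 * Jp) = (kc * kc + ks * ks) *\<^sub>R J 7" .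
  then show ?thesis by (simp add: cs)
qed

lemma J6_anti_comb: "J 6 * comb a b c + comb a b c * J 6 = - of_real (2 * b)"
proof -
  have "J 6 * comb a b c + comb a b c * J 6
      = (J 6 * S a + S a * J 6) + (2*b) *\<^sub>R (J 6 * J 6) + c *\<^sub>R (J 6 * Jp + Jp * J 6)"
    by (simp add: comb_def algebra_simps scaleR_2x)
  also have "\<dots> = - of_real (2 * b)" by (simp add: S_a6 Jp_a6 J66 of_real_def)
  finally show ?thesis .
qed

lemma sq_comb:
  "comb a b c * comb a b c = - of_real (ssq a + b^2 + c^2) + (2*c*ks) *\<^sub>R (D * S a)"
proof -
  have "comb a b c * comb a b c = S a * S a + b *\<^sub>R (S a * J 6 + J 6 * S a)
      + c *\<^sub>R (S a * Jp + Jp * S a) + (b*b) *\<^sub>R (J 6 * J 6) + (b*c) *\<^sub>R (J 6 * Jp + Jp * J 6)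
      + (c*c) *\<^sub>R (Jp * Jp)"
    by (simp add: comb_def algebra_simps)
  also have "\<dots> = - of_real (ssq a + b^2 + c^2) + (2*c*ks) *\<^sub>R (D * S a)"
    unfolding S_Jp S_sq by (simp add: S_a6 Jp_a6 J66 Jp_sq of_real_def algebra_simps power2_eq_square)
  finally show ?thesis .
qed


lemma J_inv: "i \<in> {1..7} \<Longrightarrow> J i * (- J i) = 1"
  using sq by simp

lemma key:
  assumes h: "comb a b c * comb a b c = of_real t"
  shows "c *\<^sub>R S a = 0"
proof -
  define d where "d = 2*c*ks"
  define r where "r = t + (ssq a + b^2 + c^2)"
  define A where "A = S a"
  have h1: "d *\<^sub>R (D * A) = of_real r"
    using h unfolding sq_comb d_def r_def A_def by (simp add: algebra_simps)
  have "D * (d *\<^sub>R (D * A)) = D * of_real r" using h1 by simp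
  then have h2: "- (d *\<^sub>R A) = r *\<^sub>R D"
    by (simp add: mult.assoc[symmetric] DD of_real_def)
  have k1: "(1::nat) \<in> {1..5}" "(2::nat) \<in> {1..5}" by auto
  have "J 1 * (- (d *\<^sub>R A)) + (- (d *\<^sub>R A)) * J 1 = - (d *\<^sub>R (J 1 * A + A * J 1))"
    by (simp add: algebra_simps)
  also have "\<dots> = of_real (2 * d * a 1)" unfolding A_def S_anti_k[OF k1(1)] by (simp add: of_real_def)
  finally have "of_real (2 * d * a 1) = J 1 * (r *\<^sub>R D) + (r *\<^sub>R D) * J 1" unfolding h2 by simp
  also have "\<dots> = (2 * r) *\<^sub>R (D * J 1)" using J_D[OF k1(1)] by (simp add: scaleR_2x)
  finally have h3: "of_real (2 * d * a 1) = (2 * r) *\<^sub>R (D * J 1)" .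
  have "J 2 * of_real (2 * d * a 1) = of_real (2 * d * a 1) * J 2" by (simp add: of_real_def)
  then have m1: "(2 * r) *\<^sub>R (J 2 * (D * J 1)) = (2 * r) *\<^sub>R (D * J 1 * J 2)"
    unfolding h3 by simp
  have m2: "D * J 1 * J 2 = - (J 2 * (D * J 1))"
  proof -
    have "D * J 1 * J 2 = D * (J 1 * J 2)" by (simp add: mult.assoc)
    also have "\<dots> = - (D * J 2 * J 1)"
    proof -
      have a12: "J 1 * J 2 = - (J 2 * J 1)" by (rule an) auto
      show ?thesis by (simp only: a12 mult.assoc mult_minus_right)
    qed
    also have "\<dots> = - (J 2 * (D * J 1))" by (simp add: J_D[OF k1(2), symmetric] mult.assoc[symmetric])
    finally show ?thesis .
  qed
  have eqP: "(2 * r) *\<^sub>R (J 2 * (D * J 1)) = - ((2 * r) *\<^sub>R (J 2 * (D * J 1)))"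
    using m1 unfolding m2 by (simp only: scaleR_minus_right)
  have s0: "(2 * r) *\<^sub>R (J 2 * (D * J 1)) + (2 * r) *\<^sub>R (J 2 * (D * J 1)) = 0"
    using eqP by (simp only: eq_neg_iff_add_eq_0)
  have "(4 * r) *\<^sub>R (J 2 * (D * J 1)) = (2 * r + 2 * r) *\<^sub>R (J 2 * (D * J 1))" by simp
  also have "\<dots> = 0" unfolding scaleR_add_left by (rule s0)
  finally have "(4 * r) *\<^sub>R (J 2 * (D * J 1)) = 0" .
  moreover have "(J 2 * (D * J 1)) * (- (J 1 * (D * J 2))) = 1"
  proof -
    have "(J 2 * (D * J 1)) * (J 1 * (D * J 2)) = J 2 * (D * (J 1 * J 1) * D) * J 2"
      by (simp add: mult.assoc)
    also have "\<dots> = -1"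
    proof -
      have "J (Suc 0) * J (Suc 0) = -1" by (rule sq) auto
      then show ?thesis by (simp add: Jkk[OF k1(1)] DD Jkk[OF k1(2)])
    qed
    finally show ?thesis by simp
  qed
  ultimately have "4 * r = 0" using inv_scale0 by blast
  then have "d *\<^sub>R A = 0" using h2 by simp
  then have "c = 0 \<or> A = 0" unfolding d_def using si_pos by simp
  then show ?thesis unfolding A_def by auto
qed

lemma J6_plus:
  assumes h: "comb a b c * comb a b c = of_real t"
  shows "(J 6 + comb a b c) * (J 6 + comb a b c) = of_real (t - 1 - 2*b)"
proof -
  have "(J 6 + comb a b c) * (J 6 + comb a b c)
     = J 6 * J 6 + (J 6 * comb a b c + comb a b c * J 6) + comb a b c * comb a b c"
    by (simp add: algebra_simps)
  also have "\<dots> = of_real (t - 1 - 2*b)" unfolding J6_anti_comb h J66 by (simp add: of_real_def algebra_simps)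
  finally show ?thesis .
qed

lemma S_zero: "S (\<lambda>_. 0) = 0" by (simp add: S_def)
lemma S_delta: "k \<in> {1..5} \<Longrightarrow> S (\<lambda>i. if i = k then 1 else 0) = J k"
proof -
  assume k: "k \<in> {1..5}"
  have eq: "(\<lambda>i. (if i = k then 1 else 0) *\<^sub>R J i) = (\<lambda>i. if i = k then J k else 0)" by auto
  show ?thesis unfolding S_def eq using k by simp
qed
lemma S_add: "S (\<lambda>i. a i + e i) = S a + S e"
  by (simp add: S_def scaleR_add_left sum.distrib)
lemma comb_J6: "comb (\<lambda>_. 0) 1 0 = J 6" by (simp add: comb_def S_zero)
lemma comb_Jp: "comb (\<lambda>_. 0) 0 1 = Jp" by (simp add: comb_def S_zero)
lemma comb_Jk: "k \<in> {1..5} \<Longrightarrow> comb (\<lambda>i. if i = k then 1 else 0) 0 0 = J k"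
  by (simp add: comb_def S_delta)
lemma comb_plus_Jp: "comb a b c + Jp = comb a b (c + 1)"
  by (simp add: comb_def algebra_simps)
lemma comb_plus_Jk: "k \<in> {1..5} \<Longrightarrow> comb a b c + J k = comb (\<lambda>i. a i + (if i = k then 1 else 0)) b c"
  by (simp add: comb_def S_add S_delta algebra_simps)


lemma main_alg:
  assumes NM: "N * M = 1" and MN: "M * N = 1"
    and fw: "\<And>a b c. \<exists>a' b' c'. N * comb a b c * M = comb a' b' c'"
    and bw: "\<And>a b c. \<exists>a' b' c'. M * comb a b c * N = comb a' b' c'"
  shows "\<exists>e\<in>{1, -1::real}. M * J 6 * N = J 6 \<and> M * J 7 * N = e *\<^sub>R J 7 \<and> M * Jp * N = e *\<^sub>R Jp"
proof -
  define phi where "phi x = N * x * M" for x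
  define psi where "psi x = M * x * N" for x
  have MNz: "M * (N * z) = z" for z by (simp add: mult.assoc[symmetric] MN)
  have NMz: "N * (M * z) = z" for z by (simp add: mult.assoc[symmetric] NM)
  have phi_mult: "phi (x * y) = phi x * phi y" for x y by (simp add: phi_def mult.assoc MNz)
  have psi_mult: "psi (x * y) = psi x * psi y" for x y by (simp add: psi_def mult.assoc NMz)
  have phi_add: "phi (x + y) = phi x + phi y" for x y by (simp add: phi_def algebra_simps)
  have psi_add: "psi (x + y) = psi x + psi y" for x y by (simp add: psi_def algebra_simps)
  have phi_sc: "phi (t *\<^sub>R x) = t *\<^sub>R phi x" for t x by (simp add: phi_def)
  have psi_sc: "psi (t *\<^sub>R x) = t *\<^sub>R psi x" for t x by (simp add: psi_def)
  have phi_minus: "phi (- x) = - phi x" for x by (simp add: phi_def)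
  have psi_minus: "psi (- x) = - psi x" for x by (simp add: psi_def)
  have phi_diff: "phi (x - y) = phi x - phi y" for x y by (simp add: phi_def algebra_simps)
  have phi_of: "phi (of_real t) = of_real t" for t by (simp add: phi_def of_real_def mult.assoc NM)
  have psi_of: "psi (of_real t) = of_real t" for t by (simp add: psi_def of_real_def mult.assoc MN)
  have psiphi: "psi (phi x) = x" for x by (simp add: psi_def phi_def mult.assoc MNz)
      (simp add: mult.assoc[symmetric] MN)
  have phipsi: "phi (psi x) = x" for x by (simp add: psi_def phi_def mult.assoc NMz)
      (simp add: mult.assoc[symmetric] NM)
  have sq_phi: "phi x * phi x = of_real (-1)" if "x * x = -1" for x
    using that phi_mult[of x x] phi_of[of "-1"] by simp
  have sq_psi: "psi x * psi x = of_real (-1)" if "x * x = -1" for x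
    using that psi_mult[of x x] psi_of[of "-1"] by simp
  have k1: "(1::nat) \<in> {1..5}" "(2::nat) \<in> {1..5}" by auto
  obtain a b c where X: "phi (J 6) = comb a b c" using fw[of "\<lambda>_. 0" 1 0] unfolding comb_J6 phi_def by blast
  have XX: "comb a b c * comb a b c = of_real (-1)" using sq_phi[OF J66] X by simp
  have c0: "c *\<^sub>R S a = 0" by (rule key[OF XX])
  obtain a1 b1 c1 where L1: "psi Jp = comb a1 b1 c1" using bw[of "\<lambda>_. 0" 0 1] unfolding comb_Jp psi_def by blast
  have "comb a1 b1 c1 * comb a1 b1 c1 = of_real (-1)" using sq_psi[OF Jp_sq] L1 by simp
  then have P1: "(J 6 + psi Jp) * (J 6 + psi Jp) = of_real (-1 - 1 - 2 * b1)"
    unfolding L1 by (rule J6_plus)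
  have "phi ((J 6 + psi Jp) * (J 6 + psi Jp)) = of_real (-1 - 1 - 2 * b1)"
    unfolding P1 by (rule phi_of)
  moreover have "phi ((J 6 + psi Jp) * (J 6 + psi Jp)) = comb a b (c+1) * comb a b (c+1)"
    by (simp only: phi_mult phi_add X phipsi comb_plus_Jp)
  ultimately have "comb a b (c+1) * comb a b (c+1) = of_real (-1 - 1 - 2 * b1)" by simp
  hence "(c+1) *\<^sub>R S a = 0" by (rule key)
  then have Sa0: "S a = 0" using c0 by (simp add: algebra_simps)
  obtain a2 b2 c2 where L2: "psi (J 1) = comb a2 b2 c2"
    using bw[of "\<lambda>i. if i = 1 then 1 else 0" 0 0] unfolding comb_Jk[OF k1(1)] psi_def by blast
  have "comb a2 b2 c2 * comb a2 b2 c2 = of_real (-1)" using sq_psi[OF Jkk[OF k1(1)]] L2 by simp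
  then have P2: "(J 6 + psi (J 1)) * (J 6 + psi (J 1)) = of_real (-1 - 1 - 2 * b2)"
    unfolding L2 by (rule J6_plus)
  have "phi ((J 6 + psi (J 1)) * (J 6 + psi (J 1))) = of_real (-1 - 1 - 2 * b2)"
    unfolding P2 by (rule phi_of)
  moreover have "phi ((J 6 + psi (J 1)) * (J 6 + psi (J 1)))
     = comb (\<lambda>i. a i + (if i = 1 then 1 else 0)) b c * comb (\<lambda>i. a i + (if i = 1 then 1 else 0)) b c"
    by (simp only: phi_mult phi_add X phipsi comb_plus_Jk[OF k1(1)])
  ultimately have "comb (\<lambda>i. a i + (if i = 1 then 1 else 0)) b c * comb (\<lambda>i. a i + (if i = 1 then 1 else 0)) b c
      = of_real (-1 - 1 - 2 * b2)" by simp
  hence "c *\<^sub>R S (\<lambda>i. a i + (if i = 1 then 1 else 0)) = 0" by (rule key)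
  then have "c *\<^sub>R J 1 = 0" unfolding S_add S_delta[OF k1(1)] using Sa0 by simp
  then have cz0: "c = 0" using inv_scale0[OF J_inv[of 1]] by simp
  have Xb: "phi (J 6) = b *\<^sub>R J 6" using X Sa0 cz0 by (simp add: comb_def)
  have "(b *\<^sub>R J 6) * (b *\<^sub>R J 6) = of_real (-1)" using XX unfolding X[symmetric] Xb .
  then have "(b * b) *\<^sub>R (J 6 * J 6) = of_real (-1)" by simp
  then have "of_real (b * b) = (of_real 1 :: 'a)" by (simp add: J66 of_real_def)
  then have bb: "b * b = 1" by (simp only: of_real_eq_iff)
  then have bne: "b \<noteq> 0" by auto
  have anti_tr: "w * J 6 = - (J 6 * w)" if "w * phi (J 6) = - (phi (J 6) * w)" for w
  proof -
    from that have "w * (b *\<^sub>R J 6) = - ((b *\<^sub>R J 6) * w)" unfolding Xb .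
    then have "b *\<^sub>R (w * J 6) = b *\<^sub>R (- (J 6 * w))"
      by (simp only: mult_scaleR_right mult_scaleR_left scaleR_minus_right)
    then show ?thesis using bne scaleR_cancel_left by blast
  qed
  have gen: "\<exists>a' c'. w = S a' + c' *\<^sub>R Jp \<and> c' *\<^sub>R S a' = 0"
    if w: "w = comb a' b' c'" and ww: "w * w = of_real (-1)" and wa: "w * J 6 = - (J 6 * w)" for w a' b' c'
  proof -
    have "J 6 * w + w * J 6 = 0" using wa by simp
    then have "of_real (2 * b') = (0::'a)" unfolding w J6_anti_comb by simp
    then have "2 * b' = 0" by (simp only: of_real_eq_0_iff)
    then have "b' = 0" by simp
    moreover have "c' *\<^sub>R S a' = 0" using key ww w by blast
    ultimately show ?thesis using w by (auto simp: comb_def)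
  qed
  have phi_anti: "phi x * phi (J 6) = - (phi (J 6) * phi x)" if "x * J 6 = - (J 6 * x)" for x
    using that by (metis phi_mult phi_minus)
  obtain az bz cz where Z: "phi Jp = comb az bz cz" using fw[of "\<lambda>_. 0" 0 1] unfolding comb_Jp phi_def by blast
  have ZZ: "phi Jp * phi Jp = of_real (-1)" using sq_phi[OF Jp_sq] .
  have Za: "phi Jp * J 6 = - (J 6 * phi Jp)"
    by (rule anti_tr, rule phi_anti) (simp add: Jp_a6)
  obtain az' cz' where Z': "phi Jp = S az' + cz' *\<^sub>R Jp" and cz': "cz' *\<^sub>R S az' = 0"
    using gen[OF Z ZZ Za] by blast
  have Yk: "\<exists>ay cy. phi (J k) = S ay + cy *\<^sub>R Jp \<and> cy *\<^sub>R S ay = 0 \<and> phi (J k) * phi (J k) = of_real (-1)"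
    if k: "k \<in> {1..5}" for k
  proof -
    obtain ay byy cy where Y: "phi (J k) = comb ay byy cy"
      using fw[of "\<lambda>i. if i = k then 1 else 0" 0 0] unfolding comb_Jk[OF k] phi_def by blast
    have YY: "phi (J k) * phi (J k) = of_real (-1)" using sq_phi[OF Jkk[OF k]] .
    have Ya: "phi (J k) * J 6 = - (J 6 * phi (J k))"
      by (rule anti_tr, rule phi_anti) (simp add: ak6[OF k])
    show ?thesis using gen[OF Y YY Ya] YY by blast
  qed
  have Yex: "\<exists>k ay. k \<in> {1..5} \<and> phi (J k) = S ay \<and> phi (J k) * phi (J k) = of_real (-1)"
  proof -
    obtain a1 c1 where Y1: "phi (J 1) = S a1 + c1 *\<^sub>R Jp" "c1 *\<^sub>R S a1 = 0"
      "phi (J 1) * phi (J 1) = of_real (-1)" using Yk[OF k1(1)] by blast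
    obtain a2 c2 where Y2: "phi (J 2) = S a2 + c2 *\<^sub>R Jp" "c2 *\<^sub>R S a2 = 0"
      "phi (J 2) * phi (J 2) = of_real (-1)" using Yk[OF k1(2)] by blast
    show ?thesis
    proof (cases "c1 = 0")
      case True then show ?thesis using Y1 k1 by auto
    next
      case c1: False
      show ?thesis
      proof (cases "c2 = 0")
        case True show ?thesis
          by (rule exI[of _ 2], rule exI[of _ a2]) (use Y2 True in auto)
      next
        case c2: False
        have e1: "phi (J 1) = c1 *\<^sub>R Jp" using Y1 c1 by simp
        have e2: "phi (J 2) = c2 *\<^sub>R Jp" using Y2 c2 by simp
        have "J 1 * J 2 = - (J 2 * J 1)" by (rule an) auto
        then have "phi (J 1) * phi (J 2) = - (phi (J 2) * phi (J 1))" by (metis phi_mult phi_minus)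
        then have "(c1 * c2) *\<^sub>R (Jp * Jp) = - ((c1 * c2) *\<^sub>R (Jp * Jp))" unfolding e1 e2
          by (simp add: mult.commute)
        then have "of_real (c1 * c2) = (- of_real (c1 * c2) :: 'a)" by (simp add: Jp_sq of_real_def)
        then have "of_real (c1 * c2) + of_real (c1 * c2) = (0 :: 'a)" by (simp only: eq_neg_iff_add_eq_0)
        then have "of_real (c1 * c2 + c1 * c2) = (0 :: 'a)" by (simp only: of_real_add)
        then have "c1 * c2 + c1 * c2 = 0" by (simp only: of_real_eq_0_iff)
        then have "c1 * c2 = 0" by simp
        then show ?thesis using c1 c2 by simp
      qed
    qed
  qed
  then obtain k ay where k: "k \<in> {1..5}" and Y: "phi (J k) = S ay" and YY: "phi (J k) * phi (J k) = of_real (-1)"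
    by blast
  have R0: "Jp * J k + J k * Jp = (2 * ks) *\<^sub>R ((kc *\<^sub>R (J 6 * Jp) + ks *\<^sub>R Jp) * J k)"
    using S_Jp[of "\<lambda>i. if i = k then 1 else 0"] unfolding S_delta[OF k] D_eq[symmetric] J_D[OF k]
    by (simp add: add.commute)
  have R: "phi Jp * phi (J k) + phi (J k) * phi Jp
      = (2 * ks) *\<^sub>R ((kc *\<^sub>R (phi (J 6) * phi Jp) + ks *\<^sub>R phi Jp) * phi (J k))"
    using arg_cong[OF R0, of phi] by (simp only: phi_add phi_mult phi_sc)
  have czne: "cz' \<noteq> 0"
  proof
    assume True: "cz' = 0"
    define A where "A = S az'"
    define Yv where "Yv = S ay"
    have ZA: "phi Jp = A" using Z' True A_def by simp
    have AA: "A * A = of_real (-1)" using ZZ ZA by simp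
    have YYv: "Yv * Yv = of_real (-1)" using YY Y Yv_def by simp
    have eq: "A * Yv + Yv * A = (2 * ks) *\<^sub>R ((kc * b) *\<^sub>R (J 6 * A) + ks *\<^sub>R A) * Yv"
      using R unfolding ZA Xb Y Yv_def[symmetric] by (simp add: algebra_simps)
    define E where "E = J 6 * A * Yv"
    have F: "A * Yv + Yv * A - (2 * ks * ks) *\<^sub>R (A * Yv) = (2 * ks * kc * b) *\<^sub>R E"
      using eq unfolding E_def by (simp add: algebra_simps)
    have A7: "J 7 * A = - (A * J 7)" unfolding A_def by (rule S_a7)
    have Y7: "J 7 * Yv = - (Yv * J 7)" unfolding Yv_def by (rule S_a7)
    have cAY: "J 7 * (A * Yv) = (A * Yv) * J 7"
    proof -
      have "J 7 * (A * Yv) = - (A * (J 7 * Yv))" by (simp only: mult.assoc[symmetric] A7 mult_minus_left)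
      also have "\<dots> = (A * Yv) * J 7" by (simp only: Y7 mult_minus_right minus_minus mult.assoc)
      finally show ?thesis .
    qed
    have cYA: "J 7 * (Yv * A) = (Yv * A) * J 7"
    proof -
      have "J 7 * (Yv * A) = - (Yv * (J 7 * A))" by (simp only: mult.assoc[symmetric] Y7 mult_minus_left)
      also have "\<dots> = (Yv * A) * J 7" by (simp only: A7 mult_minus_right minus_minus mult.assoc)
      finally show ?thesis .
    qed
    have c1: "J 7 * (A * Yv + Yv * A - (2 * ks * ks) *\<^sub>R (A * Yv))
        = (A * Yv + Yv * A - (2 * ks * ks) *\<^sub>R (A * Yv)) * J 7"
      by (simp only: distrib_left distrib_right right_diff_distrib left_diff_distrib
          mult_scaleR_right mult_scaleR_left cAY cYA)
    have c2: "J 7 * E = - (E * J 7)"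
    proof -
      have "J 7 * E = - (J 6 * (J 7 * (A * Yv)))" unfolding E_def
        by (simp only: mult.assoc[symmetric] a76 mult_minus_left)
      also have "\<dots> = - (E * J 7)" unfolding E_def cAY by (simp only: mult.assoc)
      finally show ?thesis .
    qed
    let ?k = "2 * ks * kc * b"
    have "?k *\<^sub>R (J 7 * E) = ?k *\<^sub>R (E * J 7)"
      using c1 unfolding F by simp
    also have "\<dots> = - (?k *\<^sub>R (J 7 * E))" using c2 by simp
    finally have "?k *\<^sub>R (J 7 * E) + ?k *\<^sub>R (J 7 * E) = 0" by (simp only: eq_neg_iff_add_eq_0)
    then have "(2 * ?k) *\<^sub>R (J 7 * E) = 0" by (simp only: scaleR_2x)
    moreover have "(J 7 * E) * (Yv * A * J 6 * J 7) = 1"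
    proof -
      have "(J 7 * E) * (Yv * A * J 6 * J 7) = J 7 * (J 6 * (A * (Yv * Yv) * A) * J 6) * J 7"
        unfolding E_def by (simp add: mult.assoc)
      also have "\<dots> = 1" using YYv AA by (simp add: J66 J77)
      finally show ?thesis .
    qed
    ultimately have "2 * ?k = 0" using inv_scale0 by blast
    then show False using si_pos co_pos bne by simp
  qed
  have "b = 1"
  proof -
    note False = czne
    have SA0: "S az' = 0" using cz' False by simp
    have ZJ: "phi Jp = cz' *\<^sub>R Jp" using Z' SA0 by simp
    define Yv where "Yv = S ay"
    have YYv: "Yv * Yv = of_real (-1)" using YY Y Yv_def by simp
    define W where "W = J 6 * Jp * Yv"
    define U where "U = Jp * Yv"
    have DY: "D * Yv = kc *\<^sub>R W + ks *\<^sub>R U"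
      by (subst D_eq) (simp add: W_def U_def algebra_simps)
    have "phi Jp * phi (J k) + phi (J k) * phi Jp = cz' *\<^sub>R (Yv * Jp + Jp * Yv)"
      unfolding ZJ Y Yv_def[symmetric] by (simp add: algebra_simps)
    also have "\<dots> = cz' *\<^sub>R ((2 * ks) *\<^sub>R (D * Yv))" by (simp only: Yv_def S_Jp)
    also have "\<dots> = (2 * ks * cz') *\<^sub>R (kc *\<^sub>R W + ks *\<^sub>R U)" unfolding DY by simp
    finally have L: "phi Jp * phi (J k) + phi (J k) * phi Jp = (2 * ks * cz') *\<^sub>R (kc *\<^sub>R W + ks *\<^sub>R U)" .
    have Rr: "(2 * ks) *\<^sub>R ((kc *\<^sub>R (phi (J 6) * phi Jp) + ks *\<^sub>R phi Jp) * phi (J k))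
        = (2 * ks * cz') *\<^sub>R ((kc * b) *\<^sub>R W + ks *\<^sub>R U)"
      unfolding Xb ZJ Y Yv_def[symmetric] W_def U_def by (simp add: algebra_simps)
    have "(2 * ks * cz') *\<^sub>R (kc *\<^sub>R W + ks *\<^sub>R U) = (2 * ks * cz') *\<^sub>R ((kc * b) *\<^sub>R W + ks *\<^sub>R U)"
      using R unfolding L Rr .
    then have "kc *\<^sub>R W + ks *\<^sub>R U = (kc * b) *\<^sub>R W + ks *\<^sub>R U"
      using si_pos False scaleR_cancel_left by force
    then have "kc *\<^sub>R W - (kc * b) *\<^sub>R W = 0" by simp
    then have "(kc * (1 - b)) *\<^sub>R (J 6 * Jp * Yv) = 0" unfolding W_def by (simp add: algebra_simps)
    moreover have "(J 6 * Jp * Yv) * (- (Yv * Jp * J 6)) = 1"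
    proof -
      have "(J 6 * Jp * Yv) * (Yv * Jp * J 6) = J 6 * (Jp * (Yv * Yv) * Jp) * J 6"
        by (simp add: mult.assoc)
      also have "\<dots> = -1" using YYv by (simp add: J66 Jp_sq)
      finally show ?thesis by simp
    qed
    ultimately have "kc * (1 - b) = 0" using inv_scale0 by blast
    then show ?thesis using co_pos by simp
  qed
  have X6: "phi (J 6) = J 6" using Xb \<open>b = 1\<close> by simp
  have ZJ: "phi Jp = cz' *\<^sub>R Jp" using Z' cz' czne by simp
  have "(cz' * cz') *\<^sub>R (Jp * Jp) = of_real (-1)" using ZZ unfolding ZJ by simp
  then have "of_real (cz' * cz') = (of_real 1 :: 'a)" by (simp add: Jp_sq of_real_def)
  then have czz: "cz' * cz' = 1" by (simp only: of_real_eq_iff)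
  have X7: "phi (J 7) = cz' *\<^sub>R J 7"
  proof -
    have "phi (J 7) = kc *\<^sub>R phi Jp - ks *\<^sub>R (phi (J 6) * phi Jp)"
      by (subst J7_eq) (simp only: phi_diff phi_sc phi_mult)
    also have "\<dots> = cz' *\<^sub>R (kc *\<^sub>R Jp - ks *\<^sub>R (J 6 * Jp))" unfolding X6 ZJ by (simp add: algebra_simps)
    also have "\<dots> = cz' *\<^sub>R J 7" using J7_eq by simp
    finally show ?thesis .
  qed
  have P6: "psi (J 6) = J 6" using psiphi[of "J 6"] unfolding X6 .
  have "J 7 = cz' *\<^sub>R psi (J 7)" using psiphi[of "J 7"] unfolding X7 psi_sc by simp
  then have "cz' *\<^sub>R J 7 = cz' *\<^sub>R (cz' *\<^sub>R psi (J 7))" by (rule arg_cong)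
  then have "cz' *\<^sub>R J 7 = (cz' * cz') *\<^sub>R psi (J 7)" by (simp only: scaleR_scaleR)
  then have P7: "psi (J 7) = cz' *\<^sub>R J 7" using czz by simp
  have PP: "psi Jp = cz' *\<^sub>R Jp"
  proof -
    have "psi Jp = kc *\<^sub>R psi (J 7) + ks *\<^sub>R (psi (J 6) * psi (J 7))"
      unfolding Jp_def D_def by (simp only: psi_add psi_sc psi_mult)
    also have "\<dots> = cz' *\<^sub>R Jp" unfolding P6 P7 Jp_def D_def by (simp add: algebra_simps)
    finally show ?thesis .
  qed
  have "cz' \<in> {1, -1}" using czz by (auto simp: square_eq_1_iff)
  then show ?thesis using P6 P7 PP unfolding psi_def by blast
qed

end



lemma matrix_add_rdistrib8: "((A::mat8) + B) ** C = A ** C + B ** C"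
  by (vector matrix_matrix_mult_def sum.distrib[symmetric] field_simps)

typedef m8 = "UNIV :: mat8 set" morphisms rep8 abs8 by simp

setup_lifting type_definition_m8

instantiation m8 :: real_algebra_1
begin
lift_definition zero_m8 :: m8 is "0::mat8" .
lift_definition one_m8 :: m8 is "mat 1 :: mat8" .
lift_definition plus_m8 :: "m8 \<Rightarrow> m8 \<Rightarrow> m8" is "(+)" .
lift_definition minus_m8 :: "m8 \<Rightarrow> m8 \<Rightarrow> m8" is "(-)" .
lift_definition uminus_m8 :: "m8 \<Rightarrow> m8" is "uminus" .
lift_definition times_m8 :: "m8 \<Rightarrow> m8 \<Rightarrow> m8" is "(**)" .
lift_definition scaleR_m8 :: "real \<Rightarrow> m8 \<Rightarrow> m8" is "scaleR" .
instance
proof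
  fix a b c :: m8 and r s :: real
  show "a + b + c = a + (b + c)" by transfer (simp add: algebra_simps)
  show "a + b = b + a" by transfer (simp add: algebra_simps)
  show "0 + a = a" by transfer simp
  show "- a + a = 0" by transfer simp
  show "a - b = a + - b" by transfer simp
  show "r *\<^sub>R (a + b) = r *\<^sub>R a + r *\<^sub>R b" by transfer (simp add: algebra_simps)
  show "(r + s) *\<^sub>R a = r *\<^sub>R a + s *\<^sub>R a" by transfer (simp add: algebra_simps)
  show "r *\<^sub>R s *\<^sub>R a = (r * s) *\<^sub>R a" by transfer simp
  show "1 *\<^sub>R a = a" by transfer simp
  show "a * b * c = a * (b * c)" by transfer (simp add: matrix_mul_assoc)
  show "(a + b) * c = a * c + b * c" by transfer (simp add: matrix_add_rdistrib8)
  show "a * (b + c) = a * b + a * c" by transfer (simp add: matrix_add_ldistrib)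
  show "1 * a = a" by transfer simp
  show "a * 1 = a" by transfer simp
  show "r *\<^sub>R a * b = r *\<^sub>R (a * b)" by transfer (simp add: scalar_matrix_assoc[symmetric])
  show "a * r *\<^sub>R b = r *\<^sub>R (a * b)" by transfer (simp add: matrix_scalar_ac scalar_matrix_assoc[symmetric])
  show "(0::m8) \<noteq> 1"
  proof transfer
    show "(0::mat8) \<noteq> mat 1"
    proof
      assume "(0::mat8) = mat 1"
      then have "(0::mat8) $ 1 $ 1 = (mat 1 :: mat8) $ 1 $ 1" by (rule arg_cong[where f="\<lambda>M. M $ 1 $ 1"])
      then show False by (simp add: mat_def)
    qed
  qed
qed
end

lemma abs8_mult: "abs8 (A ** B) = abs8 A * abs8 B" by (simp add: times_m8_def abs8_inverse)
lemma abs8_add: "abs8 (A + B) = abs8 A + abs8 B" by (simp add: plus_m8_def abs8_inverse)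
lemma abs8_minus: "abs8 (- A) = - abs8 A" by (simp add: uminus_m8_def abs8_inverse)
lemma abs8_scale: "abs8 (r *\<^sub>R A) = r *\<^sub>R abs8 A" by (simp add: scaleR_m8_def abs8_inverse)
lemma abs8_one: "abs8 (mat 1) = 1" by (simp add: one_m8_def)
lemma abs8_zero: "abs8 0 = 0" by (simp add: zero_m8_def)
lemma abs8_inj: "abs8 A = abs8 B \<longleftrightarrow> A = B" by (simp add: abs8_inject)
lemma abs8_sum: "abs8 (sum f S) = (\<Sum>i\<in>S. abs8 (f i))"
  by (induction S rule: infinite_finite_induct) (auto simp: abs8_zero abs8_add)


lemma mat_neg_right: "(A::mat8) ** (- B) = - (A ** B)"
  by (simp add: matrix_matrix_mult_def vec_eq_iff sum_negf)

lemma conj_surj: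
  fixes V :: "mat8 set" and N :: mat8
  assumes sub: "subspace V" and NT: "N ** transpose N = mat 1" and TN: "transpose N ** N = mat 1"
    and fw: "\<forall>K\<in>V. N ** K ** transpose N \<in> V"
  shows "\<forall>K\<in>V. transpose N ** K ** N \<in> V"
proof -
  define T where "T = transpose N"
  have TNX: "T ** (N ** X) = X" for X by (simp add: matrix_mul_assoc TN T_def)
  define f where "f K = N ** K ** T" for K
  have lin: "linear f"
    by (rule linearI) (simp_all add: f_def matrix_add_ldistrib matrix_add_rdistrib8
        scalar_matrix_assoc[symmetric] matrix_scalar_ac)
  have backf: "T ** f K ** N = K" for K
    by (simp add: f_def matrix_mul_assoc[symmetric] TNX) (simp add: matrix_mul_assoc TN T_def)
  have inj: "inj f" by (metis backf injI)
  have sub1: "f ` V \<subseteq> V" using fw by (auto simp: f_def T_def)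
  have sub2: "subspace (f ` V)" by (rule linear_subspace_image[OF lin sub])
  have "dim (f ` V) = dim V" by (rule dim_image_eq[OF lin]) (use inj in \<open>auto simp: inj_on_def\<close>)
  then have eq: "f ` V = V" using subspace_dim_equal[OF sub2 sub sub1] by simp
  show ?thesis
  proof
    fix K assume "K \<in> V"
    then obtain L where "L \<in> V" "K = f L" using eq by blast
    then show "transpose N ** K ** N \<in> V" using backf[of L] by (simp add: T_def)
  qed
qed

lemma inv_orth:
  fixes N :: mat8
  assumes "orthogonal_matrix N"
  shows "matrix_inv N = transpose N"
proof -
  have NT: "N ** transpose N = mat 1" and TN: "transpose N ** N = mat 1"
    using assms unfolding orthogonal_matrix_def by auto
  define A where "A = matrix_inv N"
  have "N ** A = mat 1 \<and> A ** N = mat 1"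
    unfolding A_def matrix_inv_def by (rule someI[of _ "transpose N"]) (simp add: NT TN)
  then have "N ** A = mat 1" by simp
  have "A = (transpose N ** N) ** A" by (simp add: TN)
  also have "\<dots> = transpose N" by (simp add: matrix_mul_assoc[symmetric] \<open>N ** A = mat 1\<close>)
  finally show ?thesis unfolding A_def .
qed

theorem mainTheorem11:
  fixes J :: "nat \<Rightarrow> mat8" and \<theta> :: real
  assumes ocs: "\<And>i. i \<in> {1..7} \<Longrightarrow> ocs (J i)"
    and anti: "\<And>i j. i \<in> {1..7} \<Longrightarrow> j \<in> {1..7} \<Longrightarrow> i \<noteq> j \<Longrightarrow> J i ** J j = - (J j ** J i)"
    and th: "0 < \<theta>" "\<theta> < pi / 2"
  defines "J' \<equiv> cos \<theta> *\<^sub>R J 7 + sin \<theta> *\<^sub>R (J 6 ** J 7)"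
    and "V \<equiv> span ({J i | i. i \<in> {1..6}} \<union> {cos \<theta> *\<^sub>R J 7 + sin \<theta> *\<^sub>R (J 6 ** J 7)})"
  shows "(\<forall>N. orthogonal_matrix N \<and> (\<forall>K\<in>V. N ** K ** matrix_inv N \<in> V) \<longrightarrow>
            (\<exists>\<epsilon>7 \<in> {1, -1::real}.
               matrix_inv N ** J 6 ** N = J 6 \<and>
               matrix_inv N ** J 7 ** N = \<epsilon>7 *\<^sub>R J 7 \<and>
               matrix_inv N ** J' ** N = \<epsilon>7 *\<^sub>R J'))
      \<and> \<not> (\<exists>N. orthogonal_matrix N \<and> (\<forall>K\<in>V. N ** K ** matrix_inv N \<in> V) \<and>
               matrix_inv N ** J 6 ** N = - J 6)
      \<and> (\<forall>ip. inner_product_on V ip \<and> standard_on (span {J i | i. i \<in> {1..5}}) ip \<and>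
               (\<forall>i\<in>{1..5}. ip (J 6) (J i) = 0 \<and> ip J' (J i) = 0)
             \<longrightarrow> \<not> WS_pair V ip)"
proof -
  have sqJ: "J i ** J i = - mat 1" if "i \<in> {1..7}" for i using ocs[OF that] unfolding ocs_def by blast
  define J8 where "J8 i = abs8 (J i)" for i
  interpret C: cl J8 \<theta>
  proof (unfold_locales)
    fix i assume i: "i \<in> {1..7::nat}"
    show "J8 i * J8 i = -1" unfolding J8_def abs8_mult[symmetric] sqJ[OF i] abs8_minus abs8_one ..
  next
    fix i j assume i: "i \<in> {1..7::nat}" and j: "j \<in> {1..7::nat}" and ij: "i \<noteq> j"
    show "J8 i * J8 j = - (J8 j * J8 i)" unfolding J8_def abs8_mult[symmetric] anti[OF i j ij] abs8_minus ..
  qed (use th in auto)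
  define cm where "cm a b cc = (\<Sum>i\<in>{1..5}. a i *\<^sub>R J i) + b *\<^sub>R J 6 + cc *\<^sub>R J'" for a b cc
  have Jp8: "C.Jp = abs8 J'"
    unfolding C.Jp_def C.D_def C.kc_def C.ks_def J'_def J8_def
    by (simp add: abs8_add abs8_scale abs8_mult)
  have comb8: "C.comb a b cc = abs8 (cm a b cc)" for a b cc
    unfolding C.comb_def C.S_def Jp8 cm_def J8_def
    by (simp add: abs8_add abs8_scale abs8_sum)
  have Vd: "V = span ({J i | i. i \<in> {1..6}} \<union> {J'})" unfolding V_def J'_def ..
  have Vchar: "V = {cm a b cc | a b cc. True}"
  proof
    have subT: "subspace {cm a b cc | a b cc. True}"
      unfolding subspace_def
    proof (intro conjI ballI allI)
      show "0 \<in> {cm a b cc | a b cc. True}"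
        by (rule CollectI, rule exI[of _ "\<lambda>_. 0"], rule exI[of _ 0], rule exI[of _ 0]) (simp add: cm_def)
    next
      fix x y assume "x \<in> {cm a b cc | a b cc. True}" "y \<in> {cm a b cc | a b cc. True}"
      then obtain a b cc a' b' cc' where "x = cm a b cc" "y = cm a' b' cc'" by blast
      then have "x + y = cm (\<lambda>i. a i + a' i) (b + b') (cc + cc')"
        by (simp add: cm_def scaleR_add_left sum.distrib algebra_simps)
      then show "x + y \<in> {cm a b cc | a b cc. True}" by blast
    next
      fix r x assume "x \<in> {cm a b cc | a b cc. True}"
      then obtain a b cc where "x = cm a b cc" by blast
      then have "r *\<^sub>R x = cm (\<lambda>i. r * a i) (r * b) (r * cc)"
        by (simp add: cm_def scaleR_sum_right scaleR_add_right)
      then show "r *\<^sub>R x \<in> {cm a b cc | a b cc. True}" by blast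
    qed
    have gens: "{J i | i. i \<in> {1..6}} \<union> {J'} \<subseteq> {cm a b cc | a b cc. True}"
    proof
      fix x assume "x \<in> {J i | i. i \<in> {1..6}} \<union> {J'}"
      then show "x \<in> {cm a b cc | a b cc. True}"
      proof (elim UnE)
        assume "x \<in> {J i | i. i \<in> {1..6}}"
        then obtain i where i: "i \<in> {1..6}" "x = J i" by blast
        show ?thesis
        proof (cases "i = 6")
          case True
          have "x = cm (\<lambda>_. 0) 1 0" using i True by (simp add: cm_def)
          then show ?thesis by blast
        next
          case False
          then have i5: "i \<in> {1..5}" using i by auto
          have eq: "(\<lambda>j. (if j = i then 1 else 0) *\<^sub>R J j) = (\<lambda>j. if j = i then J i else 0)" by auto
          have "cm (\<lambda>j. if j = i then 1 else 0) 0 0 = J i" unfolding cm_def eq using i5 by simp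
          then have "x = cm (\<lambda>j. if j = i then 1 else 0) 0 0" using i by simp
          then show ?thesis by blast
        qed
      next
        assume "x \<in> {J'}"
        then have "x = cm (\<lambda>_. 0) 0 1" by (simp add: cm_def)
        then show ?thesis by blast
      qed
    qed
    show "V \<subseteq> {cm a b cc | a b cc. True}" unfolding Vd by (rule span_minimal[OF gens subT])
    show "{cm a b cc | a b cc. True} \<subseteq> V"
    proof
      fix x assume "x \<in> {cm a b cc | a b cc. True}"
      then obtain a b cc where x: "x = cm a b cc" by blast
      have "(\<Sum>i\<in>{1..5}. a i *\<^sub>R J i) \<in> V"
        unfolding Vd by (rule span_sum, rule span_scale, rule span_base) auto
      moreover have "b *\<^sub>R J 6 \<in> V" unfolding Vd by (rule span_scale, rule span_base) auto
      moreover have "cc *\<^sub>R J' \<in> V" unfolding Vd by (rule span_scale, rule span_base) auto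
      ultimately show "x \<in> V" unfolding x cm_def Vd by (intro span_add) auto
    qed
  qed
  have subV: "subspace V" unfolding Vd by (rule subspace_span)
  have part1: "\<forall>N. orthogonal_matrix N \<and> (\<forall>K\<in>V. N ** K ** matrix_inv N \<in> V) \<longrightarrow>
            (\<exists>\<epsilon>7 \<in> {1, -1::real}.
               matrix_inv N ** J 6 ** N = J 6 \<and>
               matrix_inv N ** J 7 ** N = \<epsilon>7 *\<^sub>R J 7 \<and>
               matrix_inv N ** J' ** N = \<epsilon>7 *\<^sub>R J')"
  proof (intro allI impI, elim conjE)
    fix N :: mat8
    assume orth: "orthogonal_matrix N" and hN: "\<forall>K\<in>V. N ** K ** matrix_inv N \<in> V"
    have inv: "matrix_inv N = transpose N" by (rule inv_orth[OF orth])
    have NT: "N ** transpose N = mat 1" and TN: "transpose N ** N = mat 1"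
      using orth unfolding orthogonal_matrix_def by auto
    have fwV: "\<forall>K\<in>V. N ** K ** transpose N \<in> V" using hN inv by simp
    have bwV: "\<forall>K\<in>V. transpose N ** K ** N \<in> V" by (rule conj_surj[OF subV NT TN fwV])
    have fw: "\<exists>a' b' c'. abs8 N * C.comb a b cc * abs8 (transpose N) = C.comb a' b' c'" for a b cc
    proof -
      have "cm a b cc \<in> V" unfolding Vchar by blast
      then have "N ** cm a b cc ** transpose N \<in> V" using fwV by blast
      then obtain a' b' c' where "N ** cm a b cc ** transpose N = cm a' b' c'" unfolding Vchar by blast
      then show ?thesis unfolding comb8 abs8_mult[symmetric] by metis
    qed
    have bw: "\<exists>a' b' c'. abs8 (transpose N) * C.comb a b cc * abs8 N = C.comb a' b' c'" for a b cc
    proof -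
      have "cm a b cc \<in> V" unfolding Vchar by blast
      then have "transpose N ** cm a b cc ** N \<in> V" using bwV by blast
      then obtain a' b' c' where "transpose N ** cm a b cc ** N = cm a' b' c'" unfolding Vchar by blast
      then show ?thesis unfolding comb8 abs8_mult[symmetric] by metis
    qed
    have NM1: "abs8 N * abs8 (transpose N) = 1" unfolding abs8_mult[symmetric] NT abs8_one ..
    have MN1: "abs8 (transpose N) * abs8 N = 1" unfolding abs8_mult[symmetric] TN abs8_one ..
    obtain e where e: "e \<in> {1, -1::real}"
      and r6: "abs8 (transpose N) * J8 6 * abs8 N = J8 6"
      and r7: "abs8 (transpose N) * J8 7 * abs8 N = e *\<^sub>R J8 7"
      and rp: "abs8 (transpose N) * C.Jp * abs8 N = e *\<^sub>R C.Jp"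
      using C.main_alg[OF NM1 MN1 fw bw] by blast
    have "transpose N ** J 6 ** N = J 6"
      using r6 unfolding J8_def abs8_mult[symmetric] abs8_inj .
    moreover have "transpose N ** J 7 ** N = e *\<^sub>R J 7"
      using r7 unfolding J8_def abs8_mult[symmetric] abs8_scale[symmetric] abs8_inj .
    moreover have "transpose N ** J' ** N = e *\<^sub>R J'"
      using rp unfolding Jp8 abs8_mult[symmetric] abs8_scale[symmetric] abs8_inj .
    ultimately show "\<exists>\<epsilon>7 \<in> {1, -1::real}.
               matrix_inv N ** J 6 ** N = J 6 \<and>
               matrix_inv N ** J 7 ** N = \<epsilon>7 *\<^sub>R J 7 \<and>
               matrix_inv N ** J' ** N = \<epsilon>7 *\<^sub>R J'" unfolding inv using e by blast
  qed
  have J6ne: "J 6 \<noteq> - J 6"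
  proof
    assume h: "J 6 = - J 6"
    have "J 6 ** J 6 = - mat 1" by (rule sqJ) simp
    moreover have "J 6 = 0"
    proof -
      have "J 6 + J 6 = 0" using h by (simp only: eq_neg_iff_add_eq_0)
      then have "(2::real) *\<^sub>R J 6 = 0" by (simp only: scaleR_2)
      then show ?thesis by simp
    qed
    ultimately have "(0::mat8) = - mat 1" by simp
    then have "(0::mat8) $ 1 $ 1 = (- mat 1 :: mat8) $ 1 $ 1" by (rule arg_cong[where f="\<lambda>M. M $ 1 $ 1"])
    then show False by (simp add: mat_def)
  qed
  have part2: "\<not> (\<exists>N. orthogonal_matrix N \<and> (\<forall>K\<in>V. N ** K ** matrix_inv N \<in> V) \<and>
               matrix_inv N ** J 6 ** N = - J 6)"
  proof
    assume "\<exists>N. orthogonal_matrix N \<and> (\<forall>K\<in>V. N ** K ** matrix_inv N \<in> V) \<and>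
               matrix_inv N ** J 6 ** N = - J 6"
    then obtain N where "orthogonal_matrix N" "\<forall>K\<in>V. N ** K ** matrix_inv N \<in> V"
      "matrix_inv N ** J 6 ** N = - J 6" by blast
    with part1 have "J 6 = - J 6" by auto
    with J6ne show False by simp
  qed
  have part3: "\<forall>ip. inner_product_on V ip \<and> standard_on (span {J i | i. i \<in> {1..5}}) ip \<and>
               (\<forall>i\<in>{1..5}. ip (J 6) (J i) = 0 \<and> ip J' (J i) = 0)
             \<longrightarrow> \<not> WS_pair V ip"
  proof (intro allI impI notI)
    fix ip assume "WS_pair V ip"
    moreover have "J 6 \<in> V" unfolding Vd by (rule span_base) auto
    ultimately obtain N where "N \<in> normalizer_set V ip" and NJ: "N ** J 6 = - (J 6 ** N)"
      unfolding WS_pair_def by blast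
    then have orth: "orthogonal_matrix N" and hN: "\<forall>K\<in>V. N ** K ** matrix_inv N \<in> V"
      unfolding normalizer_set_def by auto
    have TN: "transpose N ** N = mat 1" using orth unfolding orthogonal_matrix_def by auto
    have "matrix_inv N ** J 6 ** N = transpose N ** (J 6 ** N)"
      by (simp add: inv_orth[OF orth] matrix_mul_assoc)
    also have "\<dots> = - (transpose N ** N ** J 6)"
    proof -
      have "J 6 ** N = - (N ** J 6)" using NJ by simp
      then show ?thesis by (simp only: mat_neg_right matrix_mul_assoc)
    qed
    also have "\<dots> = - J 6" by (simp add: TN)
    finally show False using part2 orth hN by blast
  qed
  show ?thesis using part1 part2 part3 by blast
qed

end
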